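(* Let $U$ be the distillation gadget on a complete $B$-ary tree of depth $D$. For every qubit (node) $i$ of the tree, $|\mathrm{supp}(U(Z_i\otimes\mathbb I)U^\dagger)|\le D$; that is, the locality of the parent Hamiltonian of the distillation circuit is at most $D$.
   Context: Layers of the tree are $L_1$ (leaves), $L_2,\dots,L_D$ (root); $N_u$ denotes the children of node $u$; each node is a qubit. The distillation gadget $U$: for $i=2,3,\dots,D$ in this order, for each parent $u\in L_i$ and each child $c\in N_u$, apply $\mathsf{CNOT}$ with control $u$ and target $c$. The parent Hamiltonian of $U$ is $\sum_iUZ_iU^\dagger$. *)

theory Defs
  imports Complex_Main
begin

(* The root is [], the children of u are u @ [j] (j < B).
   A node of length k lies in layer L_(D-k); leaves (length D-1) form L_1, the root forms L_D. *)
definition tree_nodes :: "nat \<Rightarrow> nat \<Rightarrow> nat list set" where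
  "tree_nodes B D = {xs. length xs < D \<and> set xs \<subseteq> {..<B}}"

definition layer :: "nat \<Rightarrow> nat \<Rightarrow> nat \<Rightarrow> nat list list" where
  "layer B D i = List.n_lists (D - i) [0..<B]"

definition children :: "nat \<Rightarrow> nat list \<Rightarrow> nat list list" where
  "children B u = map (\<lambda>j. u @ [j]) [0..<B]"

(* computational basis states of the qubits V: bit assignments vanishing outside V *)
definition states :: "'q set \<Rightarrow> ('q \<Rightarrow> bool) set" where
  "states V = {x. \<forall>v. v \<notin> V \<longrightarrow> \<not> x v}"

(* operators on the qubits V, given by their matrix entries <x|A|y> in the computational basis *)
type_synonym 'q op = "('q \<Rightarrow> bool) \<Rightarrow> ('q \<Rightarrow> bool) \<Rightarrow> complex"

definition op_mult :: "'q set \<Rightarrow> 'q op \<Rightarrow> 'q op \<Rightarrow> 'q op" where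
  "op_mult V A C = (\<lambda>x y. \<Sum>z\<in>states V. A x z * C z y)"

definition op_id :: "'q op" where
  "op_id = (\<lambda>x y. if x = y then 1 else 0)"

definition op_adj :: "'q op \<Rightarrow> 'q op" where
  "op_adj A = (\<lambda>x y. cnj (A y x))"

definition pauliZ :: "'q \<Rightarrow> 'q op" where
  "pauliZ i = (\<lambda>x y. if x = y then (if x i then -1 else 1) else 0)"

definition cnot :: "'q \<Rightarrow> 'q \<Rightarrow> 'q op" where
  "cnot u c = (\<lambda>x y. if x = y(c := (y c \<noteq> y u)) then 1 else 0)"

(* circuit of gates listed in time order: U = g_k \<cdots> g_1 *)
definition circuit :: "'q set \<Rightarrow> 'q op list \<Rightarrow> 'q op" where
  "circuit V gs = foldl (\<lambda>acc g. op_mult V g acc) op_id gs"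

definition distill_gates :: "nat \<Rightarrow> nat \<Rightarrow> nat list op list" where
  "distill_gates B D =
     concat (map (\<lambda>i. concat (map (\<lambda>u. map (\<lambda>c. cnot u c) (children B u)) (layer B D i))) [2..<D+1])"

definition distill_U :: "nat \<Rightarrow> nat \<Rightarrow> nat list op" where
  "distill_U B D = circuit (tree_nodes B D) (distill_gates B D)"

(* A acts as the identity on qubit i, i.e. A = A' \<otimes> I_i *)
definition acts_trivially_on :: "'q set \<Rightarrow> 'q op \<Rightarrow> 'q \<Rightarrow> bool" where
  "acts_trivially_on V A i \<longleftrightarrow>
     (\<forall>x\<in>states V. \<forall>y\<in>states V.
        (x i \<noteq> y i \<longrightarrow> A x y = 0) \<and> A (x(i := \<not> x i)) (y(i := \<not> y i)) = A x y)"

definition supp :: "'q set \<Rightarrow> 'q op \<Rightarrow> 'q set" where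
  "supp V A = {i \<in> V. \<not> acts_trivially_on V A i}"

end

theory Submission
  imports Defs
begin

type_synonym 'q st = "'q \<Rightarrow> bool"

definition perm_op :: "('q st \<Rightarrow> 'q st) \<Rightarrow> 'q op" where
  "perm_op f = (\<lambda>x y. if x = f y then 1 else 0)"

definition fl :: "'q \<Rightarrow> 'q \<Rightarrow> 'q st \<Rightarrow> 'q st" where
  "fl u c y = y(c := (y c \<noteq> y u))"

lemma cnot_perm: "cnot u c = perm_op (fl u c)"
  unfolding cnot_def perm_op_def fl_def by simp

lemma fl_invol: "u \<noteq> c \<Longrightarrow> fl u c (fl u c y) = y"
  unfolding fl_def by (auto simp: fun_eq_iff)

lemma fl_states: "c \<in> V \<Longrightarrow> y \<in> states V \<Longrightarrow> fl u c y \<in> states V"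
  unfolding fl_def states_def by auto

lemma finite_states: "finite V \<Longrightarrow> finite (states V)"
proof -
  assume "finite V"
  have "states V \<subseteq> (\<lambda>A v. v \<in> A) ` Pow V"
  proof
    fix x assume "x \<in> states V"
    then have "x = (\<lambda>v. v \<in> {v. x v})" "{v. x v} \<in> Pow V" unfolding states_def by auto
    then show "x \<in> (\<lambda>A v. v \<in> A) ` Pow V" by blast
  qed
  then show ?thesis using \<open>finite V\<close> finite_subset by blast
qed

fun Fr :: "('q \<times> 'q) list \<Rightarrow> 'q st \<Rightarrow> 'q st" where
  "Fr [] = id"
| "Fr ((u,c)#P) = Fr P \<circ> fl u c"

fun Gr :: "('q \<times> 'q) list \<Rightarrow> 'q st \<Rightarrow> 'q st" where
  "Gr [] = id"
| "Gr ((u,c)#P) = fl u c \<circ> Gr P"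

lemma FG: "\<forall>(u,c)\<in>set P. u \<noteq> c \<Longrightarrow> Fr P (Gr P x) = x \<and> Gr P (Fr P x) = x"
  by (induction P arbitrary: x) (auto simp: fl_invol)

lemma Fr_states: "\<forall>(u,c)\<in>set P. c \<in> V \<Longrightarrow> y \<in> states V \<Longrightarrow> Fr P y \<in> states V"
  by (induction P arbitrary: y) (auto simp: fl_states)

lemma Gr_states: "\<forall>(u,c)\<in>set P. c \<in> V \<Longrightarrow> y \<in> states V \<Longrightarrow> Gr P y \<in> states V"
  by (induction P arbitrary: y) (auto simp: fl_states)

lemma Gr_agree:
  assumes "\<forall>(u,c)\<in>set P. c \<in> Q \<longrightarrow> u \<in> Q"
  shows "\<forall>q\<in>Q. x q = x' q \<Longrightarrow> \<forall>q\<in>Q. Gr P x q = Gr P x' q"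
  using assms
proof (induction P arbitrary: x x')
  case Nil then show ?case by simp
next
  case (Cons a P)
  obtain u c where a: "a = (u,c)" by (cases a)
  have "\<forall>q\<in>Q. Gr P x q = Gr P x' q" using Cons by auto
  then show ?case using Cons.prems a by (auto simp: fl_def)
qed

lemma mult_perm:
  assumes "finite V" "y \<in> states V" "\<forall>x. \<forall>y\<in>states V. A x y = perm_op t x y" "t y \<in> states V"
  shows "op_mult V (perm_op s) A x y = perm_op (s \<circ> t) x y"
proof -
  have "op_mult V (perm_op s) A x y = (\<Sum>z\<in>states V. perm_op s x z * perm_op t z y)"
    unfolding op_mult_def using assms(2,3) by simp
  also have "\<dots> = (\<Sum>z\<in>states V. if z = t y then perm_op s x z else 0)"
    by (rule sum.cong) (auto simp: perm_op_def)
  also have "\<dots> = perm_op s x (t y)"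
    using assms(4) finite_states[OF assms(1)] by simp
  finally show ?thesis by (simp add: perm_op_def)
qed

lemma circuit_perm:
  assumes "finite V" "\<forall>(u,c)\<in>set P. c \<in> V"
    "\<forall>x. \<forall>y\<in>states V. A x y = perm_op t x y" "\<forall>y\<in>states V. t y \<in> states V"
  shows "\<forall>x. \<forall>y\<in>states V. foldl (\<lambda>acc g. op_mult V g acc) A (map (\<lambda>(u,c). cnot u c) P) x y
           = perm_op (Fr P \<circ> t) x y"
  using assms(2-)
proof (induction P arbitrary: A t)
  case Nil then show ?case by simp
next
  case (Cons a P)
  obtain u c where a: "a = (u,c)" by (cases a)
  have c: "c \<in> V" using Cons.prems a by auto
  let ?A = "op_mult V (cnot u c) A"
  have 1: "\<forall>x. \<forall>y\<in>states V. ?A x y = perm_op (fl u c \<circ> t) x y"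
    unfolding cnot_perm using mult_perm[OF assms(1)] Cons.prems by blast
  have 2: "\<forall>y\<in>states V. (fl u c \<circ> t) y \<in> states V" using Cons.prems(3) c by (simp add: fl_states)
  show ?case using Cons.IH[OF _ 1 2] Cons.prems a by (simp add: o_assoc)
qed

definition gl :: "nat \<Rightarrow> nat \<Rightarrow> (nat list \<times> nat list) list" where
  "gl B D = concat (map (\<lambda>i. concat (map (\<lambda>u. map (\<lambda>c. (u,c)) (children B u)) (layer B D i))) [2..<D+1])"

lemma gates_eq: "distill_gates B D = map (\<lambda>(u,c). cnot u c) (gl B D)"
  unfolding distill_gates_def gl_def by (simp add: map_concat o_def)

lemma gl_prop: "(u,c) \<in> set (gl B D) \<Longrightarrow> (\<exists>j. c = u @ [j]) \<and> c \<in> tree_nodes B D"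
  unfolding gl_def layer_def children_def tree_nodes_def
  by (auto simp: set_n_lists)

lemma op_mult_apply: "op_mult V A C x y = (\<Sum>z\<in>states V. A x z * C z y)"
  unfolding op_mult_def by simp

lemma finite_tree: "finite (tree_nodes B D)"
proof -
  have "tree_nodes B D \<subseteq> {xs. set xs \<subseteq> {..<B} \<and> length xs \<le> D}"
    unfolding tree_nodes_def by auto
  moreover have "finite {xs. set xs \<subseteq> {..<B} \<and> length xs \<le> D}"
    by (rule finite_lists_length_le) simp
  ultimately show ?thesis by (rule finite_subset)
qed

theorem claim8p4:
  fixes B D :: nat and i :: "nat list"
  assumes "i \<in> tree_nodes B D"
  shows "card (supp (tree_nodes B D)
           (op_mult (tree_nodes B D)
              (op_mult (tree_nodes B D) (distill_U B D) (pauliZ i))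
              (op_adj (distill_U B D)))) \<le> D"
proof -
  define V where "V = tree_nodes B D"
  define S where "S = states V"
  define P where "P = gl B D"
  define F where "F = Fr P"
  define G where "G = Gr P"
  define Pre where "Pre = (\<lambda>k. take k i) ` {..length i}"
  define U where "U = distill_U B D"
  define M where "M = op_mult V (op_mult V U (pauliZ i)) (op_adj U)"
  define s :: "nat list st \<Rightarrow> complex" where "s = (\<lambda>w. if w i then -1 else 1)"
  have fin: "finite V" unfolding V_def by (rule finite_tree)
  have finS: "finite S" unfolding S_def using finite_states[OF fin] .
  have PV: "\<forall>(u,c)\<in>set P. c \<in> V" unfolding P_def V_def using gl_prop by blast
  have Pne: "\<forall>(u,c)\<in>set P. u \<noteq> c" unfolding P_def using gl_prop by fastforce
  have PPre: "\<forall>(u,c)\<in>set P. c \<in> Pre \<longrightarrow> u \<in> Pre"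
  proof (clarify)
    fix u c assume uc: "(u,c) \<in> set P" and "c \<in> Pre"
    then obtain k where k: "k \<le> length i" "c = take k i" unfolding Pre_def by auto
    obtain j where j: "c = u @ [j]" using gl_prop uc unfolding P_def by blast
    have "u = butlast c" using j by simp
    also have "\<dots> = take (k - 1) i" using k by (simp add: butlast_take)
    finally show "u \<in> Pre" unfolding Pre_def using k by auto
  qed
  have FGi: "\<And>x. F (G x) = x \<and> G (F x) = x" unfolding F_def G_def using FG[OF Pne] by blast
  have FS: "\<And>y. y \<in> S \<Longrightarrow> F y \<in> S" unfolding F_def S_def using Fr_states[OF PV] by blast
  have GS: "\<And>y. y \<in> S \<Longrightarrow> G y \<in> S" unfolding G_def S_def using Gr_states[OF PV] by blast
  have Uperm: "\<And>x y. y \<in> S \<Longrightarrow> U x y = perm_op F x y"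
  proof -
    fix x y assume y: "y \<in> S"
    have "\<forall>x. \<forall>y\<in>states V. op_id x y = perm_op id x y" by (simp add: op_id_def perm_op_def)
    from circuit_perm[OF fin PV this] y
    show "U x y = perm_op F x y"
      unfolding U_def distill_U_def circuit_def gates_eq F_def P_def[symmetric] V_def[symmetric] S_def
      by simp
  qed
  have step1: "\<And>x w. w \<in> S \<Longrightarrow> op_mult V U (pauliZ i) x w = perm_op F x w * s w"
  proof -
    fix x w assume w: "w \<in> S"
    have "op_mult V U (pauliZ i) x w = (\<Sum>z\<in>S. if z = w then U x w * s w else 0)"
      unfolding op_mult_def S_def[symmetric] by (rule sum.cong) (auto simp: pauliZ_def s_def)
    also have "\<dots> = U x w * s w" using finS w by simp
    finally show "op_mult V U (pauliZ i) x w = perm_op F x w * s w" using Uperm w by simp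
  qed
  have pF: "\<And>x w. perm_op F x w = (if w = G x then 1 else 0)"
    unfolding perm_op_def using FGi by metis
  have Ginj: "\<And>x y. G x = G y \<Longrightarrow> x = y"
  proof -
    fix x y assume "G x = G y"
    then have "F (G x) = F (G y)" by simp
    then show "x = y" using FGi by simp
  qed
  have Mval: "\<And>x y. x \<in> S \<Longrightarrow> y \<in> S \<Longrightarrow> M x y = (if x = y then s (G x) else 0)"
  proof -
    fix x y assume x: "x \<in> S" and y: "y \<in> S"
    have "M x y = (\<Sum>w\<in>S. if w = G x then (if x = y then s w else 0) else 0)"
      unfolding M_def op_mult_apply[of V "op_mult V U (pauliZ i)"] S_def[symmetric] op_adj_def
      apply (rule sum.cong)
       apply simp
      using step1 Uperm pF Ginj by (auto simp: perm_op_def)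
    also have "\<dots> = (if x = y then s (G x) else 0)" using finS GS[OF x] by simp
    finally show "M x y = (if x = y then s (G x) else 0)" .
  qed
  have iPre: "i \<in> Pre" unfolding Pre_def by force
  have suppPre: "supp V M \<subseteq> Pre"
  proof
    fix j assume j: "j \<in> supp V M"
    then have jV: "j \<in> V" and nt: "\<not> acts_trivially_on V M j" unfolding supp_def by auto
    show "j \<in> Pre"
    proof (rule ccontr)
      assume jn: "j \<notin> Pre"
      have "acts_trivially_on V M j"
        unfolding acts_trivially_on_def S_def[symmetric]
      proof (intro ballI conjI impI)
        fix x y assume x: "x \<in> S" and y: "y \<in> S"
        show "x j \<noteq> y j \<Longrightarrow> M x y = 0" using Mval[OF x y] by auto
        have x': "x(j := \<not> x j) \<in> S" and y': "y(j := \<not> y j) \<in> S"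
          using x y jV unfolding S_def states_def by auto
        have ag: "\<forall>q\<in>Pre. G (x(j := \<not> x j)) q = G x q"
        proof -
          have "\<forall>q\<in>Pre. (x(j := \<not> x j)) q = x q" using jn by auto
          then show ?thesis using Gr_agree[OF PPre] unfolding G_def by blast
        qed
        have eq: "(x(j := \<not> x j) = y(j := \<not> y j)) = (x = y)"
          by (auto simp: fun_eq_iff)
        show "M (x(j := \<not> x j)) (y(j := \<not> y j)) = M x y"
        proof -
          have "s (G (x(j := \<not> x j))) = s (G x)" using ag iPre by (simp add: s_def)
          then show ?thesis unfolding Mval[OF x' y'] Mval[OF x y] eq by (cases "x = y") simp_all
        qed
      qed
      then show False using nt by simp
    qed
  qed
  have "card (supp V M) \<le> card Pre" using suppPre by (rule card_mono[rotated]) (simp add: Pre_def)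
  also have "\<dots> \<le> Suc (length i)" unfolding Pre_def using card_image_le[of "{..length i}" "\<lambda>k. take k i"] by simp
  also have "\<dots> \<le> D" using assms unfolding tree_nodes_def by simp
  finally show ?thesis unfolding M_def U_def V_def .
qed

end
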